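(* Let $\Pi=\Pi_1\times\cdots\times\Pi_T$ be a class of dynamic treatment regimes. For any integers $s,t$ with $1\le s\le t\le T$ and any $\epsilon>0$, $$N_{d_h}\big((t-s+1)\epsilon,\Pi_{s:t}\big)\le\prod_{\ell=s}^tN_{d_h}(\epsilon,\Pi_\ell).$$
   Context: For each stage $t$, $\mathcal{H}_t$ is a history space with elements $h_t=(\underline a_{t-1},\underline s_t)$; for $\ell\le t$ the sub-history is $h_\ell=(\underline a_{\ell-1},\underline s_\ell)\in\mathcal{H}_\ell$. $\Pi_t$ is a class of measurable maps $\pi_t:\mathcal{H}_t\to\mathcal{A}_t$ (finite action set), $\Pi_{s:t}=\Pi_s\times\cdots\times\Pi_t$ with elements $\pi_{s:t}=(\pi_s,\dots,\pi_t)$. Given points $h_t^{(1)},\dots,h_t^{(n)}\in\mathcal{H}_t$, the Hamming distance is $d_h(\pi_{s:t},\pi'_{s:t})=n^{-1}\sum_{i=1}^n\mathbf{1}\{\pi_s(h_s^{(i)})\ne\pi'_s(h_s^{(i)})\vee\cdots\vee\pi_t(h_t^{(i)})\ne\pi'_t(h_t^{(i)})\}$; $N_{d_h}(\epsilon,\Pi_{s:t},\{h_t^{(i)}\})$ is the smallest number of elements $\pi^{(1)}_{s:t},\pi^{(2)}_{s:t},\dots$ of $\Pi_{s:t}$ such that every $\pi_{s:t}\in\Pi_{s:t}$ has some $\pi^{(j)}_{s:t}$ with $d_h(\pi_{s:t},\pi^{(j)}_{s:t})\le\epsilon$; the $\epsilon$-Hamming covering number $N_{d_h}(\epsilon,\Pi_{s:t})$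 is its supremum over all $n\ge1$ and $h_t^{(1)},\dots,h_t^{(n)}\in\mathcal{H}_t$; $N_{d_h}(\epsilon,\Pi_{t:t})=N_{d_h}(\epsilon,\Pi_t)$. *)

theory Defs
  imports Main "HOL-Library.Extended_Nat" "HOL-Library.FuncSet"
begin

text \<open>A stage-t history h_t = (a_1..a_{t-1}, s_1..s_t) is a pair of lists
  (actions, states); stages are 1-based. A_l is the action set and S_l the
  state set at stage l.\<close>

type_synonym ('a,'s) hist = "'a list \<times> 's list"

definition hist_space :: "(nat \<Rightarrow> 'a set) \<Rightarrow> (nat \<Rightarrow> 's set) \<Rightarrow> nat \<Rightarrow> ('a,'s) hist set" where
  "hist_space A S t = {(as, ss). length as = t - 1 \<and> length ss = t \<and>
      (\<forall>i < t - 1. as ! i \<in> A (Suc i)) \<and> (\<forall>i < t. ss ! i \<in> S (Suc i))}"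

definition subhist :: "nat \<Rightarrow> ('a,'s) hist \<Rightarrow> ('a,'s) hist" where
  "subhist l h = (take (l - 1) (fst h), take l (snd h))"

definition policy_product :: "(nat \<Rightarrow> (('a,'s) hist \<Rightarrow> 'a) set) \<Rightarrow> nat \<Rightarrow> nat
    \<Rightarrow> (nat \<Rightarrow> ('a,'s) hist \<Rightarrow> 'a) set" where
  "policy_product Pol s t = Pi\<^sub>E {s..t} Pol"

definition hamming_dist :: "nat \<Rightarrow> nat \<Rightarrow> nat \<Rightarrow> (nat \<Rightarrow> ('a,'s) hist)
    \<Rightarrow> (nat \<Rightarrow> ('a,'s) hist \<Rightarrow> 'a) \<Rightarrow> (nat \<Rightarrow> ('a,'s) hist \<Rightarrow> 'a) \<Rightarrow> real" where
  "hamming_dist s t n h p q =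
     real (card {i. i < n \<and> (\<exists>l\<in>{s..t}. p l (subhist l (h i)) \<noteq> q l (subhist l (h i)))}) / real n"

text \<open>Covering number of a class P of tuples on {s..t} w.r.t. given points;
  infinite if no finite cover exists.\<close>
definition cover_num_pts :: "real \<Rightarrow> (nat \<Rightarrow> ('a,'s) hist \<Rightarrow> 'a) set \<Rightarrow> nat \<Rightarrow> nat
    \<Rightarrow> nat \<Rightarrow> (nat \<Rightarrow> ('a,'s) hist) \<Rightarrow> enat" where
  "cover_num_pts eps P s t n h =
     Inf {enat (card C) | C. finite C \<and> C \<subseteq> P \<and>
            (\<forall>p\<in>P. \<exists>q\<in>C. hamming_dist s t n h p q \<le> eps)}"

definition hamming_cover_num :: "(nat \<Rightarrow> 'a set) \<Rightarrow> (nat \<Rightarrow> 's set) \<Rightarrow> real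
    \<Rightarrow> (nat \<Rightarrow> (('a,'s) hist \<Rightarrow> 'a) set) \<Rightarrow> nat \<Rightarrow> nat \<Rightarrow> enat" where
  "hamming_cover_num A S eps Pol s t =
     Sup {cover_num_pts eps (policy_product Pol s t) s t n h | n h.
            n \<ge> 1 \<and> (\<forall>i<n. h i \<in> hist_space A S t)}"

end

theory Submission
  imports Defs
begin

lemma enat_prod_mono:
  "(\<And>i. i \<in> A \<Longrightarrow> f i \<le> g i) \<Longrightarrow> prod f A \<le> prod (g::_\<Rightarrow>enat) A"
  by (induct A rule: infinite_finite_induct) (auto intro!: mult_mono)

lemma enat_prod_nz:
  "finite A \<Longrightarrow> (\<forall>a\<in>A. f a \<noteq> 0) \<Longrightarrow> prod (f::_\<Rightarrow>enat) A \<noteq> 0"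
  by (induct rule: finite_induct) (auto simp: imult_is_0)

lemma enat_prod_inf:
  assumes "finite A" "l \<in> A" "f l = \<infinity>" "\<forall>a\<in>A. f a \<noteq> 0"
  shows "prod (f::_\<Rightarrow>enat) A = \<infinity>"
proof -
  have "prod f A = f l * prod f (A - {l})" using assms by (simp add: prod.remove)
  moreover have "prod f (A - {l}) \<noteq> 0" using assms by (intro enat_prod_nz) auto
  ultimately show ?thesis using assms by (simp add: imult_is_infinity)
qed

lemma subhist_idem: "subhist l (subhist l h) = subhist l h"
  by (simp add: subhist_def)

lemma subhist_space:
  assumes "h \<in> hist_space A S t" "l \<le> t"
  shows "subhist l h \<in> hist_space A S l"
  using assms by (auto simp: hist_space_def subhist_def)

lemma cover_le:
  assumes "finite C" "C \<subseteq> P" "\<forall>p\<in>P. \<exists>q\<in>C. hamming_dist s t n h p q \<le> e"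
  shows "cover_num_pts e P s t n h \<le> enat (card C)"
  unfolding cover_num_pts_def using assms by (intro Inf_lower) blast

lemma cover_attain:
  assumes "cover_num_pts e P s t n h \<noteq> \<infinity>"
  shows "\<exists>C. finite C \<and> C \<subseteq> P \<and> (\<forall>p\<in>P. \<exists>q\<in>C. hamming_dist s t n h p q \<le> e)
     \<and> cover_num_pts e P s t n h = enat (card C)"
proof -
  define X where "X = {enat (card C) | C. finite C \<and> C \<subseteq> P \<and>
            (\<forall>p\<in>P. \<exists>q\<in>C. hamming_dist s t n h p q \<le> e)}"
  have eq: "cover_num_pts e P s t n h = Inf X" unfolding cover_num_pts_def X_def by simp
  have "X \<noteq> {}" using assms eq by (auto simp: Inf_enat_def)
  then have "Inf X \<in> X" unfolding Inf_enat_def by (auto intro: LeastI)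
  then show ?thesis unfolding eq X_def by blast
qed

lemma cover_nz:
  assumes "P \<noteq> {}"
  shows "cover_num_pts e P s t n h \<noteq> 0"
proof
  assume z: "cover_num_pts e P s t n h = 0"
  then obtain C where C: "finite C" "C \<subseteq> P" "\<forall>p\<in>P. \<exists>q\<in>C. hamming_dist s t n h p q \<le> e"
     "cover_num_pts e P s t n h = enat (card C)"
    using cover_attain[of e P s t n h] by (auto simp: zero_enat_def)
  then have "C = {}" using z by (simp add: zero_enat_def)
  then show False using C assms by auto
qed

lemma key:
  fixes Pol :: "nat \<Rightarrow> (('a,'s) hist \<Rightarrow> 'a) set"
  assumes st: "s \<le> t" and n: "n \<ge> 1"
  shows "cover_num_pts (real (t-s+1)*eps) (policy_product Pol s t) s t n h
    \<le> (\<Prod>l\<in>{s..t}. cover_num_pts eps (policy_product Pol l l) l l n (\<lambda>i. subhist l (h i)))"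
    (is "?L \<le> prod ?N _")
proof (cases "\<exists>l\<in>{s..t}. Pol l = {}")
  case True
  then have "policy_product Pol s t = {}" by (auto simp: policy_product_def PiE_eq_empty_iff)
  have "?L \<le> enat (card ({}::(nat \<Rightarrow> ('a,'s) hist \<Rightarrow> 'a) set))"
    by (rule cover_le) (simp_all add: \<open>policy_product Pol s t = {}\<close>)
  then have "?L \<le> 0" by (simp only: card.empty zero_enat_def)
  then show ?thesis by simp
next
  case False
  have nz: "\<forall>l\<in>{s..t}. ?N l \<noteq> 0"
  proof
    fix l assume l: "l \<in> {s..t}"
    then have "Pol l \<noteq> {}" using False by blast
    then have "policy_product Pol l l \<noteq> {}" by (simp add: policy_product_def PiE_eq_empty_iff)
    then show "?N l \<noteq> 0" by (rule cover_nz)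
  qed
  show ?thesis
  proof (cases "\<exists>l\<in>{s..t}. ?N l = \<infinity>")
    case True
    then obtain l where "l \<in> {s..t}" "?N l = \<infinity>" by blast
    then have "prod ?N {s..t} = \<infinity>" using nz by (intro enat_prod_inf) auto
    then show ?thesis by simp
  next
    case False
    then have "\<forall>l\<in>{s..t}. \<exists>C. finite C \<and> C \<subseteq> policy_product Pol l l \<and>
       (\<forall>p\<in>policy_product Pol l l. \<exists>q\<in>C. hamming_dist l l n (\<lambda>i. subhist l (h i)) p q \<le> eps)
       \<and> ?N l = enat (card C)"
    proof (intro ballI cover_attain)
      fix l assume "l \<in> {s..t}"
      then show "?N l \<noteq> \<infinity>" using False by metis
    qed
    then obtain C where C: "\<And>l. l\<in>{s..t} \<Longrightarrow> finite (C l) \<and> C l \<subseteq> policy_product Pol l l \<and>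
       (\<forall>p\<in>policy_product Pol l l. \<exists>q\<in>C l. hamming_dist l l n (\<lambda>i. subhist l (h i)) p q \<le> eps)
       \<and> ?N l = enat (card (C l))"
      by metis
    define D where "D = (\<lambda>f. restrict (\<lambda>l. f l l) {s..t}) ` Pi\<^sub>E {s..t} C"
    have finD: "finite D" unfolding D_def using C by (intro finite_imageI finite_PiE) auto
    have cardD: "card D \<le> (\<Prod>l\<in>{s..t}. card (C l))"
    proof -
      have "card D \<le> card (Pi\<^sub>E {s..t} C)" unfolding D_def
        using C by (intro card_image_le finite_PiE) auto
      also have "\<dots> = (\<Prod>l\<in>{s..t}. card (C l))" by (simp add: card_PiE)
      finally show ?thesis .
    qed
    have subD: "D \<subseteq> policy_product Pol s t"
    proof
      fix q assume "q \<in> D"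
      then obtain f where f: "f \<in> Pi\<^sub>E {s..t} C" "q = restrict (\<lambda>l. f l l) {s..t}"
        unfolding D_def by blast
      have "\<And>l. l \<in> {s..t} \<Longrightarrow> f l l \<in> Pol l"
      proof -
        fix l assume l: "l \<in> {s..t}"
        then have "f l \<in> policy_product Pol l l" using f C by blast
        then show "f l l \<in> Pol l" by (auto simp: policy_product_def)
      qed
      then show "q \<in> policy_product Pol s t" using f by (auto simp: policy_product_def)
    qed
    have covD: "\<forall>p\<in>policy_product Pol s t. \<exists>q\<in>D. hamming_dist s t n h p q \<le> real (t-s+1)*eps"
    proof
      fix p assume p: "p \<in> policy_product Pol s t"
      have "\<forall>l\<in>{s..t}. \<exists>q\<in>C l. hamming_dist l l n (\<lambda>i. subhist l (h i)) (restrict p {l}) q \<le> eps"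
      proof
        fix l assume l: "l \<in> {s..t}"
        have "restrict p {l} \<in> policy_product Pol l l" using p l by (auto simp: policy_product_def)
        then show "\<exists>q\<in>C l. hamming_dist l l n (\<lambda>i. subhist l (h i)) (restrict p {l}) q \<le> eps"
          using C l by blast
      qed
      then obtain g where g: "\<And>l. l\<in>{s..t} \<Longrightarrow> g l \<in> C l \<and>
          hamming_dist l l n (\<lambda>i. subhist l (h i)) (restrict p {l}) (g l) \<le> eps"
        by metis
      define q where "q = restrict (\<lambda>l. g l l) {s..t}"
      have "restrict g {s..t} \<in> Pi\<^sub>E {s..t} C" using g by auto
      then have qD: "q \<in> D" unfolding D_def q_def
        by (intro image_eqI[of _ _ "restrict g {s..t}"]) auto
      define B where "B = (\<lambda>l. {i. i < n \<and> p l (subhist l (h i)) \<noteq> g l l (subhist l (h i))})"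
      have Bl: "real (card (B l)) \<le> eps * real n" if l: "l \<in> {s..t}" for l
      proof -
        have "hamming_dist l l n (\<lambda>i. subhist l (h i)) (restrict p {l}) (g l) = real (card (B l)) / real n"
          unfolding hamming_dist_def B_def by (simp add: subhist_idem)
        then show ?thesis using g[OF l] n by (simp add: divide_le_eq)
      qed
      have Beq: "{i. i < n \<and> (\<exists>l\<in>{s..t}. p l (subhist l (h i)) \<noteq> q l (subhist l (h i)))}
          = (\<Union>l\<in>{s..t}. B l)"
        unfolding B_def q_def by auto
      have "real (card (\<Union>l\<in>{s..t}. B l)) \<le> real (\<Sum>l\<in>{s..t}. card (B l))"
        by (intro of_nat_mono card_UN_le) auto
      also have "\<dots> = (\<Sum>l\<in>{s..t}. real (card (B l)))" by simp
      also have "\<dots> \<le> (\<Sum>l\<in>{s..t}. eps * real n)" by (intro sum_mono Bl)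
      also have "\<dots> = real (t-s+1) * eps * real n" using st by simp
      finally have "real (card (\<Union>l\<in>{s..t}. B l)) / real n \<le> real (t-s+1) * eps"
        using n by (simp add: divide_le_eq)
      then have "hamming_dist s t n h p q \<le> real (t-s+1)*eps"
        unfolding hamming_dist_def Beq .
      then show "\<exists>q\<in>D. hamming_dist s t n h p q \<le> real (t-s+1)*eps" using qD by blast
    qed
    have "?L \<le> enat (card D)" by (rule cover_le[OF finD subD covD])
    also have "\<dots> \<le> enat (\<Prod>l\<in>{s..t}. card (C l))" using cardD by simp
    also have "\<dots> = (\<Prod>l\<in>{s..t}. enat (card (C l)))"
      by (simp add: of_nat_eq_enat[symmetric] of_nat_prod)
    also have "\<dots> = prod ?N {s..t}" using C by (intro prod.cong) auto
    finally show ?thesis .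
  qed
qed

theorem lemma6:
  fixes A :: "nat \<Rightarrow> 'a set" and S :: "nat \<Rightarrow> 's set"
    and Pol :: "nat \<Rightarrow> (('a,'s) hist \<Rightarrow> 'a) set"
    and T s t :: nat and eps :: real
  assumes "\<And>l. l \<in> {1..T} \<Longrightarrow> finite (A l)"
    and "\<And>l. l \<in> {1..T} \<Longrightarrow> Pol l \<subseteq> {p. \<forall>h\<in>hist_space A S l. p h \<in> A l}"
    and "1 \<le> s" and "s \<le> t" and "t \<le> T"
    and "eps > 0"
  shows "hamming_cover_num A S (real (t - s + 1) * eps) Pol s t
           \<le> (\<Prod>l\<in>{s..t}. hamming_cover_num A S eps Pol l l)"
  unfolding hamming_cover_num_def
proof (rule Sup_least, clarify)
  fix n :: nat and h assume n: "1 \<le> n" and h: "\<forall>i<n. h i \<in> hist_space A S t"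
  have "cover_num_pts (real (t - s + 1) * eps) (policy_product Pol s t) s t n h
    \<le> (\<Prod>l\<in>{s..t}. cover_num_pts eps (policy_product Pol l l) l l n (\<lambda>i. subhist l (h i)))"
    using key[OF assms(4) n] .
  also have "\<dots> \<le> (\<Prod>l\<in>{s..t}. Sup {cover_num_pts eps (policy_product Pol l l) l l n h |n h.
            1 \<le> n \<and> (\<forall>i<n. h i \<in> hist_space A S l)})"
  proof (rule enat_prod_mono, rule Sup_upper)
    fix l assume l: "l \<in> {s..t}"
    have "\<forall>i<n. subhist l (h i) \<in> hist_space A S l" using h l by (auto intro: subhist_space)
    then show "cover_num_pts eps (policy_product Pol l l) l l n (\<lambda>i. subhist l (h i))
      \<in> {cover_num_pts eps (policy_product Pol l l) l l n h |n h.
            1 \<le> n \<and> (\<forall>i<n. h i \<in> hist_space A S l)}" using n by blast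
  qed
  finally show "cover_num_pts (real (t - s + 1) * eps) (policy_product Pol s t) s t n h
    \<le> (\<Prod>l\<in>{s..t}. Sup {cover_num_pts eps (policy_product Pol l l) l l n h |n h.
            1 \<le> n \<and> (\<forall>i<n. h i \<in> hist_space A S l)})" .
qed

end
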